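(* Let $(\Omega,\mathcal{F},P_0)$ be a complete probability space, $\epsilon\in(0,1)$, $\mathcal{C}\subseteq\mathcal{F}$ a sub-$\sigma$-algebra, and $\rho$ a sublinear operator on $L^{2+\epsilon}_{\mathcal{F}}(\Omega,P_0)$ with representation set $\mathcal{P}$, satisfying the standing assumptions below. If $\rho$ is stable, then for a given $\xi\in L^{4+2\epsilon}_{\mathcal{F}}(\Omega,P_0)$, $$\sup_{P\in\mathcal{P}}\inf_{\eta\in L^{2+\epsilon}_{\mathcal{C}}(P_0)}E_P[(\xi-\eta)^2]=\max_{P\in\mathcal{P}}\inf_{\eta\in L^{2+\epsilon}_{\mathcal{C}}(P_0)}E_P[(\xi-\eta)^2].$$
   Context: A sublinear operator is a map $\rho:L^{2+\epsilon}_{\mathcal{F}}(\Omega,P_0)\to\mathbb{R}$ that is monotone, constant preserving, sub-additive and positively homogeneous. Its representation set $\mathcal{P}$ is the family of all linear expectations (identified with probability measures $P$) dominated by $\rho$, so $\rho(\xi)=\max_{P\in\mathcal{P}}E_P[\xi]$. Write $f^P=dP/dP_0$, $\mathcal{D}=\{f^P:P\in\mathcal{P}\}$. Standing assumptions: every $P\in\mathcal{P}$ is equivalent to $P_0$; $\mathcal{D}$ is norm-bounded in $L^{1+\frac{2}{\epsilon}}_{\mathcal{F}}(P_0)$ and $\sigma(L^{1+\frac{2}{\epsilon}}(P_0),L^{1+\frac{\epsilon}{2}}(P_0))$-compact. $\rho$ is stable if for each $P\in\mathcal{P}$ the random variable $f^P/E_{P_0}[f^P\mid\mathcal{C}]$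 lies in $\mathcal{D}$. $L^{2+\epsilon}_{\mathcal{C}}(P_0)$ denotes the $\mathcal{C}$-measurable elements of $L^{2+\epsilon}(P_0)$. *)

theory Defs
  imports "HOL-Probability.Probability"
begin

text \<open>Random variables are represented by real-valued functions on the sample space;
  elements of L^p are such functions up to P0-a.e. equality.\<close>

definition Lp :: "'a measure \<Rightarrow> real \<Rightarrow> ('a \<Rightarrow> real) set" where
  "Lp M p = {f. f \<in> borel_measurable M \<and> integrable M (\<lambda>x. \<bar>f x\<bar> powr p)}"

definition Lp_sub :: "'a measure \<Rightarrow> 'a measure \<Rightarrow> real \<Rightarrow> ('a \<Rightarrow> real) set" where
  "Lp_sub M C p = {f. f \<in> Lp M p \<and> f \<in> borel_measurable C}"

definition sublinear_operator :: "'a measure \<Rightarrow> real \<Rightarrow> (('a \<Rightarrow> real) \<Rightarrow> real) \<Rightarrow> bool" where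
  "sublinear_operator M p \<rho> \<longleftrightarrow>
     (\<forall>X\<in>Lp M p. \<forall>Y\<in>Lp M p. (AE x in M. X x \<le> Y x) \<longrightarrow> \<rho> X \<le> \<rho> Y) \<and>
     (\<forall>c::real. \<rho> (\<lambda>_. c) = c) \<and>
     (\<forall>X\<in>Lp M p. \<forall>Y\<in>Lp M p. \<rho> (\<lambda>x. X x + Y x) \<le> \<rho> X + \<rho> Y) \<and>
     (\<forall>X\<in>Lp M p. \<forall>l::real. l \<ge> 0 \<longrightarrow> \<rho> (\<lambda>x. l * X x) = l * \<rho> X)"

definition rep_set :: "'a measure \<Rightarrow> real \<Rightarrow> (('a \<Rightarrow> real) \<Rightarrow> real) \<Rightarrow> 'a measure set" where
  "rep_set M p \<rho> = {P. sets P = sets M \<and> prob_space P \<and> absolutely_continuous M P \<and>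
      (\<forall>X\<in>Lp M p. integrable P X \<and> (\<integral>x. X x \<partial>P) \<le> \<rho> X)}"

definition dens :: "'a measure \<Rightarrow> 'a measure \<Rightarrow> 'a \<Rightarrow> real" where
  "dens M P = (\<lambda>x. enn2real (RN_deriv M P x))"

definition dens_set :: "'a measure \<Rightarrow> real \<Rightarrow> (('a \<Rightarrow> real) \<Rightarrow> real) \<Rightarrow> ('a \<Rightarrow> real) set" where
  "dens_set M p \<rho> = dens M ` rep_set M p \<rho>"

text \<open>The weak topology sigma(L^q, L^r) on L^q (q, r conjugate): the coarsest topology
  making all maps g \<mapsto> E_{P0}[g h], h \<in> L^r, continuous.\<close>
definition weak_Lp_topology :: "'a measure \<Rightarrow> real \<Rightarrow> real \<Rightarrow> ('a \<Rightarrow> real) topology" where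
  "weak_Lp_topology M q r =
     pullback_topology (Lp M q)
       (\<lambda>g. restrict (\<lambda>h. \<integral>x. g x * h x \<partial>M) (Lp M r))
       (product_topology (\<lambda>_. euclideanreal) (Lp M r))"

definition Lp_norm :: "'a measure \<Rightarrow> real \<Rightarrow> ('a \<Rightarrow> real) \<Rightarrow> real" where
  "Lp_norm M p f = (\<integral>x. \<bar>f x\<bar> powr p \<partial>M) powr (1 / p)"

definition stable :: "'a measure \<Rightarrow> 'a measure \<Rightarrow> real \<Rightarrow> (('a \<Rightarrow> real) \<Rightarrow> real) \<Rightarrow> bool" where
  "stable M C p \<rho> \<longleftrightarrow>
     (\<forall>P\<in>rep_set M p \<rho>. \<exists>Q\<in>rep_set M p \<rho>.
        AE x in M. dens M Q x = dens M P x / real_cond_exp M C (dens M P) x)"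

end

theory Submission
  imports Defs
begin

lemma LpI: "f \<in> borel_measurable M \<Longrightarrow> integrable M (\<lambda>x. \<bar>f x\<bar> powr p) \<Longrightarrow> f \<in> Lp M p"
  by (simp add: Lp_def)

lemma LpD: "f \<in> Lp M p \<Longrightarrow> f \<in> borel_measurable M" "f \<in> Lp M p \<Longrightarrow> integrable M (\<lambda>x. \<bar>f x\<bar> powr p)"
  by (auto simp: Lp_def)

lemma Lp_bound:
  assumes "f \<in> borel_measurable M" "g \<in> Lp M p" "p \<ge> 0" "AE x in M. \<bar>f x\<bar> \<le> \<bar>g x\<bar>"
  shows "f \<in> Lp M p"
proof (rule LpI[OF assms(1)])
  show "integrable M (\<lambda>x. \<bar>f x\<bar> powr p)"
  proof (rule Bochner_Integration.integrable_bound[OF LpD(2)[OF assms(2)]])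
    show "(\<lambda>x. \<bar>f x\<bar> powr p) \<in> borel_measurable M" using assms(1) by measurable
    show "AE x in M. norm (\<bar>f x\<bar> powr p) \<le> norm (\<bar>g x\<bar> powr p)"
      using assms(4) by eventually_elim (simp add: powr_mono2 assms(3))
  qed
qed

lemma Lp_smult: assumes "f \<in> Lp M p" shows "(\<lambda>x. c * f x) \<in> Lp M p"
proof (rule LpI)
  show "(\<lambda>x. c * f x) \<in> borel_measurable M" using LpD(1)[OF assms] by measurable
  have "integrable M (\<lambda>x. \<bar>c\<bar> powr p * \<bar>f x\<bar> powr p)" using LpD(2)[OF assms] by simp
  then show "integrable M (\<lambda>x. \<bar>c * f x\<bar> powr p)" by (simp add: abs_mult powr_mult)
qed

lemma Lp_add: assumes "f \<in> Lp M p" "g \<in> Lp M p" "p \<ge> 0" shows "(\<lambda>x. f x + g x) \<in> Lp M p"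
proof (rule LpI)
  show m: "(\<lambda>x. f x + g x) \<in> borel_measurable M" using LpD(1)[OF assms(1)] LpD(1)[OF assms(2)] by measurable
  have i: "integrable M (\<lambda>x. 2 powr p * (\<bar>f x\<bar> powr p + \<bar>g x\<bar> powr p))"
    using LpD(2)[OF assms(1)] LpD(2)[OF assms(2)] by simp
  show "integrable M (\<lambda>x. \<bar>f x + g x\<bar> powr p)"
  proof (rule Bochner_Integration.integrable_bound[OF i])
    show "(\<lambda>x. \<bar>f x + g x\<bar> powr p) \<in> borel_measurable M" using m by measurable
    show "AE x in M. norm (\<bar>f x + g x\<bar> powr p) \<le> norm (2 powr p * (\<bar>f x\<bar> powr p + \<bar>g x\<bar> powr p))"
    proof (intro AE_I2)
      fix x
      have "\<bar>f x + g x\<bar> powr p \<le> (2 * max \<bar>f x\<bar> \<bar>g x\<bar>) powr p"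
        by (rule powr_mono2) (use assms(3) in auto)
      also have "\<dots> = 2 powr p * max \<bar>f x\<bar> \<bar>g x\<bar> powr p" by (simp add: powr_mult)
      also have "\<dots> \<le> 2 powr p * (\<bar>f x\<bar> powr p + \<bar>g x\<bar> powr p)"
        by (intro mult_left_mono) (auto simp: max_def)
      finally show "norm (\<bar>f x + g x\<bar> powr p) \<le> norm (2 powr p * (\<bar>f x\<bar> powr p + \<bar>g x\<bar> powr p))"
        by simp
    qed
  qed
qed

lemma Lp_const: assumes "finite_measure M" shows "(\<lambda>x. c) \<in> Lp M p"
  using assms by (intro LpI) (auto intro: finite_measure.integrable_const)

lemma Lp_mono_exp:
  assumes "finite_measure M" "f \<in> Lp M q" "0 \<le> p" "p \<le> q"
  shows "f \<in> Lp M p"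
proof (rule LpI[OF LpD(1)[OF assms(2)]])
  have i: "integrable M (\<lambda>x. 1 + \<bar>f x\<bar> powr q)"
    using Bochner_Integration.integrable_add[OF finite_measure.integrable_const[OF assms(1), of 1] LpD(2)[OF assms(2)]] by simp
  show "integrable M (\<lambda>x. \<bar>f x\<bar> powr p)"
  proof (rule Bochner_Integration.integrable_bound[OF i])
    show "(\<lambda>x. \<bar>f x\<bar> powr p) \<in> borel_measurable M" using LpD(1)[OF assms(2)] by measurable
    show "AE x in M. norm (\<bar>f x\<bar> powr p) \<le> norm (1 + \<bar>f x\<bar> powr q)"
    proof (intro AE_I2)
      fix x
      have "\<bar>f x\<bar> powr p \<le> 1 + \<bar>f x\<bar> powr q"
      proof (cases "\<bar>f x\<bar> \<le> 1")
        case True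
        then have "\<bar>f x\<bar> powr p \<le> 1"
          using assms(3) powr_mono2[of p "\<bar>f x\<bar>" 1] by simp
        then show ?thesis by (smt (verit) powr_ge_zero)
      next
        case False
        then have "\<bar>f x\<bar> powr p \<le> \<bar>f x\<bar> powr q" using assms(4) by (intro powr_mono) auto
        then show ?thesis by simp
      qed
      then show "norm (\<bar>f x\<bar> powr p) \<le> norm (1 + \<bar>f x\<bar> powr q)" by simp
    qed
  qed
qed

lemma exists_linear_below:
  fixes V :: "('a \<Rightarrow> real) set" and \<rho> :: "('a \<Rightarrow> real) \<Rightarrow> real"
  assumes add: "\<And>x y. x\<in>V \<Longrightarrow> y\<in>V \<Longrightarrow> (\<lambda>z. x z + y z) \<in> V"
  and smult: "\<And>x l. x\<in>V \<Longrightarrow> (\<lambda>z. l * x z) \<in> V"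
  and sub: "\<And>x y. x\<in>V \<Longrightarrow> y\<in>V \<Longrightarrow> \<rho> (\<lambda>z. x z + y z) \<le> \<rho> x + \<rho> y"
  and hom: "\<And>x l. x\<in>V \<Longrightarrow> l \<ge> 0 \<Longrightarrow> \<rho> (\<lambda>z. l * x z) = l * \<rho> x"
  shows "\<exists>L. (\<forall>x\<in>V. \<forall>y\<in>V. L (\<lambda>z. x z + y z) = L x + L y) \<and> (\<forall>x\<in>V. \<forall>l. L (\<lambda>z. l * x z) = l * L x) \<and> (\<forall>x\<in>V. L x \<le> \<rho> x)"
proof -
  have negV: "(\<lambda>z. - x z) \<in> V" if "x \<in> V" for x using smult[OF that, of "-1"] by simp
  define K where "K = {q. (\<forall>x\<in>V. \<forall>y\<in>V. q (\<lambda>z. x z + y z) \<le> q x + q y) \<and>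
      (\<forall>x\<in>V. \<forall>l\<ge>0. q (\<lambda>z. l * x z) = l * q x) \<and> (\<forall>x\<in>V. q x \<le> \<rho> x)}"
  define E where "E q = {(x,t). x\<in>V \<and> q x < (t::real)}" for q :: "('a \<Rightarrow> real) \<Rightarrow> real"
  have EsubD: "q2 x \<le> q1 x" if "E q1 \<subseteq> E q2" "x \<in> V" for q1 q2 x
  proof (rule ccontr)
    assume "\<not> q2 x \<le> q1 x"
    then have "(x, q2 x) \<in> E q1" using that by (auto simp: E_def)
    then show False using that by (auto simp: E_def)
  qed
  have EsubI: "E q1 \<subseteq> E q2" if "\<And>x. x\<in>V \<Longrightarrow> q2 x \<le> q1 x" for q1 q2
    using that by (force simp: E_def)
  have zero_fun: "(\<lambda>z. x z + - x z) = (\<lambda>z. 0 * x z)" for x :: "'a \<Rightarrow> real" by auto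
  have Kadd: "q (\<lambda>z. x z + y z) \<le> q x + q y" if "q \<in> K" "x \<in> V" "y \<in> V" for q x y
    using that unfolding K_def by blast
  have Khom: "q (\<lambda>z. l * x z) = l * q x" if "q \<in> K" "x \<in> V" "l \<ge> 0" for q x l
    using that unfolding K_def by blast
  have Kle: "q x \<le> \<rho> x" if "q \<in> K" "x \<in> V" for q x
    using that unfolding K_def by blast
  have q0: "q (\<lambda>z. 0 * x z) = 0" if "q \<in> K" "x \<in> V" for q x
  proof -
    have "q (\<lambda>z. 0 * x z) = 0 * q x" using that unfolding K_def by blast
    then show ?thesis by simp
  qed
  have qlow: "- \<rho> (\<lambda>z. - x z) \<le> q x" if "q \<in> K" "x \<in> V" for q x
  proof -
    have n: "(\<lambda>z. - x z) \<in> V" using negV smult that by auto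
    have "0 = q (\<lambda>z. x z + - x z)" using q0[OF that] by (simp add: zero_fun)
    also have "\<dots> \<le> q x + q (\<lambda>z. - x z)" by (rule Kadd[OF that n])
    also have "q (\<lambda>z. - x z) \<le> \<rho> (\<lambda>z. - x z)" by (rule Kle[OF that(1) n])
    finally show ?thesis by simp
  qed
  have rhoK: "\<rho> \<in> K" unfolding K_def using sub hom by auto
  have "\<exists>M\<in>E ` K. \<forall>X\<in>E ` K. M \<subseteq> X \<longrightarrow> X = M"
  proof (rule subset_Zorn)
    fix C assume ch: "subset.chain (E ` K) C"
    show "\<exists>U\<in>E ` K. \<forall>X\<in>C. X \<subseteq> U"
    proof (cases "C = {}")
      case True then show ?thesis using rhoK by auto
    next
      case False
      define Q where "Q = {q\<in>K. E q \<in> C}"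
      have CQ: "C = E ` Q" using ch unfolding Q_def subset_chain_def by auto
      have QK: "Q \<subseteq> K" unfolding Q_def by auto
      have Qne: "Q \<noteq> {}" using CQ False by auto
      have Qch: "(\<forall>x\<in>V. q1 x \<le> q2 x) \<or> (\<forall>x\<in>V. q2 x \<le> q1 x)" if "q1 \<in> Q" "q2 \<in> Q" for q1 q2
      proof -
        have "E q1 \<subseteq> E q2 \<or> E q2 \<subseteq> E q1" using ch that unfolding subset_chain_def Q_def by auto
        then show ?thesis using EsubD by blast
      qed
      define r where "r x = Inf ((\<lambda>q. q x) ` Q)" for x
      have bdd: "bdd_below ((\<lambda>q. q x) ` Q)" if "x \<in> V" for x
        using qlow that QK by (intro bdd_belowI[of _ "- \<rho> (\<lambda>z. - x z)"]) blast
      have rle: "r x \<le> q x" if "q \<in> Q" "x \<in> V" for q x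
        unfolding r_def using bdd[OF that(2)] that by (intro cInf_lower) auto
      have rge: "c \<le> r x" if "\<And>q. q \<in> Q \<Longrightarrow> c \<le> q x" for c x
        unfolding r_def using Qne that by (intro cInf_greatest) auto
      have "r \<in> K"
      proof -
        have s: "r (\<lambda>z. x z + y z) \<le> r x + r y" if xy: "x\<in>V" "y\<in>V" for x y
        proof -
          have "r (\<lambda>z. x z + y z) - q2 y \<le> q1 x" if qq: "q1 \<in> Q" "q2 \<in> Q" for q1 q2
          proof -
            from Qch[OF qq] obtain q where q: "q \<in> Q" "q x \<le> q1 x" "q y \<le> q2 y"
              using qq xy by blast
            have "r (\<lambda>z. x z + y z) \<le> q (\<lambda>z. x z + y z)" using rle q add xy by auto
            also have "\<dots> \<le> q x + q y" using q QK xy unfolding K_def by blast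
            finally show ?thesis using q by linarith
          qed
          then have "\<And>q2. q2 \<in> Q \<Longrightarrow> r (\<lambda>z. x z + y z) - q2 y \<le> r x" using rge by blast
          then have "\<And>q2. q2 \<in> Q \<Longrightarrow> r (\<lambda>z. x z + y z) - r x \<le> q2 y" by force
          then have "r (\<lambda>z. x z + y z) - r x \<le> r y" using rge by blast
          then show ?thesis by linarith
        qed
        have h: "r (\<lambda>z. l * x z) = l * r x" if "x\<in>V" "l \<ge> 0" for x l
        proof (cases "l = 0")
          case True
          have "\<And>q. q \<in> Q \<Longrightarrow> q (\<lambda>z. l * x z) = 0" using q0 QK that True by auto
          then have "(\<lambda>q. q (\<lambda>z. l * x z)) ` Q = {0}" using Qne by (auto simp: image_iff)
          then have "r (\<lambda>z. l * x z) = 0" unfolding r_def by simp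
          then show ?thesis using True by simp
        next
          case False
          then have lp: "l > 0" using that by auto
          have lx: "(\<lambda>z. l * x z) \<in> V" using negV smult that by auto
          have eq: "q (\<lambda>z. l * x z) = l * q x" if "q \<in> Q" for q using that QK \<open>x\<in>V\<close> \<open>l \<ge> 0\<close> unfolding K_def by blast
          have "r (\<lambda>z. l * x z) \<le> l * r x"
          proof -
            have "\<And>q. q \<in> Q \<Longrightarrow> r (\<lambda>z. l * x z) / l \<le> q x"
              using rle[OF _ lx] eq lp by (simp add: divide_le_eq mult.commute)
            then have "r (\<lambda>z. l * x z) / l \<le> r x" using rge by blast
            then show ?thesis using lp by (simp add: divide_le_eq mult.commute)
          qed
          moreover have "l * r x \<le> r (\<lambda>z. l * x z)"
            using rle[OF _ that(1)] eq lp by (intro rge) (metis less_eq_real_def mult_left_mono)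
          ultimately show ?thesis by linarith
        qed
        have b: "r x \<le> \<rho> x" if "x \<in> V" for x
          using Qne QK rle that unfolding K_def by fastforce
        show ?thesis unfolding K_def using s h b by auto
      qed
      moreover have "\<forall>X\<in>C. X \<subseteq> E r" using CQ rle EsubI by auto
      ultimately show ?thesis by auto
    qed
  qed
  then obtain p where pK: "p \<in> K" and pmax: "\<And>q. q \<in> K \<Longrightarrow> E p \<subseteq> E q \<Longrightarrow> E q = E p" by auto
  have pmin: "q x = p x" if "q \<in> K" "\<And>x. x \<in> V \<Longrightarrow> q x \<le> p x" "x \<in> V" for q x
  proof -
    have "E p \<subseteq> E q" using EsubI that by auto
    then have "E q = E p" using pmax that by auto
    then have "p x \<le> q x" using EsubD that by auto
    then show ?thesis using that by force
  qed
  have psub: "p (\<lambda>z. x z + y z) \<le> p x + p y" if "x \<in> V" "y \<in> V" for x y using pK that unfolding K_def by blast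
  have phom: "p (\<lambda>z. l * x z) = l * p x" if "x \<in> V" "l \<ge> 0" for x l using pK that unfolding K_def by blast
  have pneg: "p (\<lambda>z. - y z) = - p y" if yV: "y \<in> V" for y
  proof -
    define q where "q x = Inf {p (\<lambda>z. x z + t * y z) - t * p y | t. t \<ge> 0}" for x
    have tyV: "(\<lambda>z. x z + t * y z) \<in> V" if "x \<in> V" for x t using add smult that yV by auto
    have low: "- p (\<lambda>z. - x z) \<le> p (\<lambda>z. x z + t * y z) - t * p y" if "x \<in> V" "t \<ge> 0" for x t
    proof -
      have e: "(\<lambda>z. t * y z) = (\<lambda>z. (\<lambda>z. x z + t * y z) z + (\<lambda>z. - x z) z)" by auto
      have "t * p y = p (\<lambda>z. t * y z)" using phom yV that by auto
      also have "\<dots> \<le> p (\<lambda>z. x z + t * y z) + p (\<lambda>z. - x z)"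
        unfolding e by (rule psub[OF tyV[OF that(1)] negV[OF that(1)]])
      finally show ?thesis by linarith
    qed
    have qle: "q x \<le> p (\<lambda>z. x z + t * y z) - t * p y" if "x \<in> V" "t \<ge> 0" for x t
      unfolding q_def using low[OF that(1)] that by (intro cInf_lower) (auto intro!: bdd_belowI)
    have qge: "c \<le> q x" if "\<And>t. t \<ge> 0 \<Longrightarrow> c \<le> p (\<lambda>z. x z + t * y z) - t * p y" for c x
      unfolding q_def using that by (intro cInf_greatest) auto
    have qp: "q x \<le> p x" if "x \<in> V" for x
      using qle[OF that, of 0] by simp
    have "q \<in> K"
    proof -
      have s: "q (\<lambda>z. x1 z + x2 z) \<le> q x1 + q x2" if xs: "x1 \<in> V" "x2 \<in> V" for x1 x2
      proof -
        have "q (\<lambda>z. x1 z + x2 z) - (p (\<lambda>z. x2 z + t2 * y z) - t2 * p y) \<le> p (\<lambda>z. x1 z + t1 * y z) - t1 * p y"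
          if "t1 \<ge> 0" "t2 \<ge> 0" for t1 t2
        proof -
          have e: "(\<lambda>z. (\<lambda>z. x1 z + x2 z) z + (t1 + t2) * y z) = (\<lambda>z. (\<lambda>z. x1 z + t1 * y z) z + (\<lambda>z. x2 z + t2 * y z) z)"
            by (auto simp: algebra_simps)
          have "q (\<lambda>z. x1 z + x2 z) \<le> p (\<lambda>z. (\<lambda>z. x1 z + x2 z) z + (t1 + t2) * y z) - (t1 + t2) * p y"
            using qle add xs that by auto
          also have "p (\<lambda>z. (\<lambda>z. x1 z + x2 z) z + (t1 + t2) * y z) \<le> p (\<lambda>z. x1 z + t1 * y z) + p (\<lambda>z. x2 z + t2 * y z)"
            unfolding e using psub tyV xs by auto
          finally show ?thesis by (simp add: algebra_simps)
        qed
        then have "\<And>t2. t2 \<ge> 0 \<Longrightarrow> q (\<lambda>z. x1 z + x2 z) - (p (\<lambda>z. x2 z + t2 * y z) - t2 * p y) \<le> q x1"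
          using qge by blast
        then have "\<And>t2. t2 \<ge> 0 \<Longrightarrow> q (\<lambda>z. x1 z + x2 z) - q x1 \<le> p (\<lambda>z. x2 z + t2 * y z) - t2 * p y"
          by force
        then have "q (\<lambda>z. x1 z + x2 z) - q x1 \<le> q x2" using qge by blast
        then show ?thesis by linarith
      qed
      have h: "q (\<lambda>z. l * x z) = l * q x" if "x \<in> V" "l \<ge> 0" for x l
      proof (cases "l = 0")
        case True
        have "p (\<lambda>z. (\<lambda>z. l * x z) z + t * y z) - t * p y = 0" if "t \<ge> 0" for t
          using phom[OF yV that] True by simp
        then have "q (\<lambda>z. l * x z) = 0" unfolding q_def
          by (smt (verit, best) Collect_cong cInf_singleton order.refl singleton_conv)
        then show ?thesis using True by simp
      next
        case False
        then have lp: "l > 0" using that by auto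
        have eqt: "p (\<lambda>z. (\<lambda>z. l * x z) z + t * y z) - t * p y = l * (p (\<lambda>z. x z + (t / l) * y z) - (t / l) * p y)"
          if "t \<ge> 0" for t
        proof -
          have e: "(\<lambda>z. (\<lambda>z. l * x z) z + t * y z) = (\<lambda>z. l * (\<lambda>z. x z + (t / l) * y z) z)"
            using lp by (auto simp: algebra_simps)
          have h: "p (\<lambda>z. l * (\<lambda>z. x z + (t / l) * y z) z) = l * p (\<lambda>z. x z + (t / l) * y z)"
            by (rule phom[OF tyV[OF \<open>x\<in>V\<close>] \<open>l\<ge>0\<close>])
          have "l * (p (\<lambda>z. x z + (t / l) * y z) - (t / l) * p y) = l * p (\<lambda>z. x z + (t / l) * y z) - t * p y"
            using lp by (simp add: right_diff_distrib)
          then show ?thesis unfolding e h by simp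
        qed
        have "q (\<lambda>z. l * x z) \<le> l * q x"
        proof -
          have "q (\<lambda>z. l * x z) / l \<le> p (\<lambda>z. x z + s * y z) - s * p y" if "s \<ge> 0" for s
          proof -
            have "q (\<lambda>z. l * x z) \<le> p (\<lambda>z. (\<lambda>z. l * x z) z + (l * s) * y z) - (l * s) * p y"
              using qle smult \<open>x \<in> V\<close> that lp by auto
            also have "\<dots> = l * (p (\<lambda>z. x z + s * y z) - s * p y)" using eqt[of "l * s"] that lp by simp
            finally show ?thesis using lp by (simp add: divide_le_eq mult.commute)
          qed
          then have "q (\<lambda>z. l * x z) / l \<le> q x" using qge by blast
          then show ?thesis using lp by (simp add: divide_le_eq mult.commute)
        qed
        moreover have "l * q x \<le> q (\<lambda>z. l * x z)"
        proof (rule qge)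
          fix t :: real assume "t \<ge> 0"
          then have "q x \<le> p (\<lambda>z. x z + (t / l) * y z) - (t / l) * p y" using qle[OF \<open>x\<in>V\<close>, of "t / l"] \<open>t \<ge> 0\<close> lp by simp
          then show "l * q x \<le> p (\<lambda>z. (\<lambda>z. l * x z) z + t * y z) - t * p y"
            using eqt[OF \<open>t\<ge>0\<close>] lp by simp
        qed
        ultimately show ?thesis by linarith
      qed
      have b: "q x \<le> \<rho> x" if "x \<in> V" for x using qp[OF that] pK that unfolding K_def by fastforce
      show ?thesis unfolding K_def using s h b by auto
    qed
    then have qeq: "q x = p x" if "x \<in> V" for x using pmin qp that by auto
    have nyV: "(\<lambda>z. - y z) \<in> V" using negV smult yV by auto
    have b0: "p (\<lambda>z. 0) = 0" using phom[OF yV, of 0] by simp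
    have "p (\<lambda>z. - y z) \<le> - p y"
      using qle[OF nyV, of 1] b0 qeq[OF nyV] by simp
    moreover have "0 \<le> p y + p (\<lambda>z. - y z)"
      using psub[OF yV nyV] b0 by simp
    ultimately show ?thesis by linarith
  qed
  have padd: "p (\<lambda>z. x z + y z) = p x + p y" if "x \<in> V" "y \<in> V" for x y
  proof -
    have e: "(\<lambda>z. - (\<lambda>z. x z + y z) z) = (\<lambda>z. (\<lambda>z. - x z) z + (\<lambda>z. - y z) z)" by auto
    have "- p (\<lambda>z. x z + y z) = p (\<lambda>z. - (\<lambda>z. x z + y z) z)" using pneg[OF add[OF that]] by simp
    also have "\<dots> \<le> p (\<lambda>z. - x z) + p (\<lambda>z. - y z)" unfolding e by (rule psub[OF negV negV, OF that])
    also have "\<dots> = - p x - p y" using pneg that by auto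
    finally show ?thesis using psub that by force
  qed
  have pmul: "p (\<lambda>z. l * x z) = l * p x" if "x \<in> V" for x l
  proof (cases "l \<ge> 0")
    case True then show ?thesis using phom that by auto
  next
    case False
    have e: "(\<lambda>z. l * x z) = (\<lambda>z. - (\<lambda>z. (-l) * x z) z)" by auto
    have "p (\<lambda>z. - (\<lambda>z. (-l) * x z) z) = - p (\<lambda>z. (-l) * x z)" by (rule pneg[OF smult[OF that]])
    then show ?thesis unfolding e using phom[OF that, of "-l"] False by simp
  qed
  show ?thesis using padd pmul pK unfolding K_def by blast
qed

lemma decreasing_to_zero:
  fixes L :: "('a \<Rightarrow> real) \<Rightarrow> real"
  assumes M: "finite_measure M" and p: "p > 0"
  and mono: "\<And>X Y. X \<in> Lp M p \<Longrightarrow> Y \<in> Lp M p \<Longrightarrow> AE x in M. X x \<le> Y x \<Longrightarrow> L X \<le> L Y"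
  and hom: "\<And>X c. X \<in> Lp M p \<Longrightarrow> L (\<lambda>x. c * X x) = c * L X"
  and Zm: "\<And>n. Z n \<in> borel_measurable M"
  and Zpos: "\<And>n x. x \<in> space M \<Longrightarrow> 0 \<le> Z n x"
  and Zdec: "\<And>n x. x \<in> space M \<Longrightarrow> Z (Suc n) x \<le> Z n x"
  and Zlim: "\<And>x. x \<in> space M \<Longrightarrow> (\<lambda>n. Z n x) \<longlonglongrightarrow> 0"
  and Z0: "Z 0 \<in> Lp M p"
  shows "(\<lambda>n. L (Z n)) \<longlonglongrightarrow> 0"
proof -
  have Zdec': "Z n x \<le> Z m x" if "m \<le> n" "x \<in> space M" for m n x
    using that(1)
  proof (induction n)
    case 0 then show ?case by simp
  next
    case (Suc n)
    show ?case
    proof (cases "m = Suc n")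
      case False
      then have "m \<le> n" using Suc by auto
      then show ?thesis using Suc.IH Zdec[OF that(2), of n] by linarith
    qed simp
  qed
  have ZL: "Z n \<in> Lp M p" for n
    using Zdec'[of 0 n] Zpos p by (intro Lp_bound[OF Zm Z0]) (auto intro!: AE_I2)
  have zL: "(\<lambda>x. 0) \<in> Lp M p" using Lp_const[OF M] .
  have L0: "L (\<lambda>x. 0) = 0" using hom[OF Z0, of 0] by simp
  have Lpos: "0 \<le> L (Z n)" for n
    using mono[OF zL ZL] Zpos L0 by (auto intro!: AE_I2)
  have Ldec: "L (Z n) \<le> L (Z m)" if "m \<le> n" for m n
    using mono[OF ZL ZL] Zdec' that by (auto intro!: AE_I2)
  define I where "I n = (\<integral>x. \<bar>Z n x\<bar> powr p \<partial>M)" for n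
  have Ilim: "I \<longlonglongrightarrow> 0"
  proof -
    have "(\<lambda>n. \<integral>x. \<bar>Z n x\<bar> powr p \<partial>M) \<longlonglongrightarrow> (\<integral>x. 0 \<partial>M)"
    proof (rule integral_dominated_convergence[where w="\<lambda>x. \<bar>Z 0 x\<bar> powr p"])
      show "(\<lambda>x. 0::real) \<in> borel_measurable M" by simp
      show "(\<lambda>x. \<bar>Z n x\<bar> powr p) \<in> borel_measurable M" for n using Zm[of n] by measurable
      show "integrable M (\<lambda>x. \<bar>Z 0 x\<bar> powr p)" using LpD(2)[OF Z0] .
      show "AE x in M. (\<lambda>n. \<bar>Z n x\<bar> powr p) \<longlonglongrightarrow> 0"
      proof (intro AE_I2)
        fix x assume x: "x \<in> space M"
        have "(\<lambda>n. \<bar>Z n x\<bar>) \<longlonglongrightarrow> 0" using tendsto_rabs_zero[OF Zlim[OF x]] .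
        then show "(\<lambda>n. \<bar>Z n x\<bar> powr p) \<longlonglongrightarrow> 0"
          by (rule tendsto_zero_powrI) (use p in auto)
      qed
      show "AE x in M. norm (\<bar>Z n x\<bar> powr p) \<le> \<bar>Z 0 x\<bar> powr p" for n
        using Zdec'[of 0 n] Zpos p by (auto intro!: AE_I2 powr_mono2)
    qed
    then show ?thesis unfolding I_def by simp
  qed
  define e where "e k = (1/2::real)^k / (real k + 1) powr p" for k
  have epos: "e k > 0" for k unfolding e_def by simp
  have "\<forall>k. \<exists>n. I n < e k"
  proof
    fix k
    have "eventually (\<lambda>n. I n < e k) sequentially" using order_tendstoD(2)[OF Ilim epos] .
    then show "\<exists>n. I n < e k" by (auto simp: eventually_sequentially)
  qed
  then obtain nk where nk: "\<And>k. I (nk k) < e k" by metis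
  define f where "f k x = ennreal (((real k + 1) * Z (nk k) x) powr p)" for k x
  define W where "W x = (\<Sum>k. f k x)" for x
  have fm: "f k \<in> borel_measurable M" for k unfolding f_def using Zm[of "nk k"] by measurable
  have Wm: "W \<in> borel_measurable M" unfolding W_def using fm by measurable
  have intf: "integral\<^sup>N M (f k) \<le> ennreal ((1/2)^k)" for k
  proof -
    have i: "integrable M (\<lambda>x. (real k + 1) powr p * \<bar>Z (nk k) x\<bar> powr p)"
      using LpD(2)[OF ZL[of "nk k"]] by simp
    have eq: "f k x = ennreal ((real k + 1) powr p * \<bar>Z (nk k) x\<bar> powr p)" if "x \<in> space M" for x
      unfolding f_def using Zpos[OF that, of "nk k"] by (simp add: powr_mult)
    have "integral\<^sup>N M (f k) = (\<integral>\<^sup>+ x. ennreal ((real k + 1) powr p * \<bar>Z (nk k) x\<bar> powr p) \<partial>M)"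
      using eq by (intro nn_integral_cong) auto
    also have "\<dots> = ennreal (\<integral>x. (real k + 1) powr p * \<bar>Z (nk k) x\<bar> powr p \<partial>M)"
      using i by (intro nn_integral_eq_integral) auto
    also have "(\<integral>x. (real k + 1) powr p * \<bar>Z (nk k) x\<bar> powr p \<partial>M) = (real k + 1) powr p * I (nk k)"
      unfolding I_def by simp
    also have "\<dots> \<le> (real k + 1) powr p * e k" using nk[of k] by (intro mult_left_mono) auto
    also have "\<dots> = (1/2)^k" unfolding e_def by simp
    finally show ?thesis by (simp add: ennreal_leI)
  qed
  have "integral\<^sup>N M W = (\<Sum>k. integral\<^sup>N M (f k))" unfolding W_def using nn_integral_suminf[OF fm] .
  also have "\<dots> \<le> (\<Sum>k. ennreal ((1/2)^k))" using intf by (intro suminf_le) auto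
  also have "\<dots> = ennreal (\<Sum>k. (1/2::real)^k)" by (intro suminf_ennreal2) auto
  finally have Wfin: "integral\<^sup>N M W < \<infinity>" by (simp add: le_less_trans)
  have WAE: "AE x in M. W x \<noteq> \<infinity>" using nn_integral_PInf_AE[OF Wm] Wfin by auto
  define Y where "Y x = enn2real (W x) powr (1/p)" for x
  have Ym: "Y \<in> borel_measurable M" unfolding Y_def using Wm by measurable
  have YL: "Y \<in> Lp M p"
  proof (rule LpI[OF Ym])
    have e: "\<bar>Y x\<bar> powr p = enn2real (W x)" for x
      unfolding Y_def using p by (simp add: powr_powr)
    have "integrable M (\<lambda>x. enn2real (W x))"
    proof (rule integrableI_nonneg)
      show "(\<lambda>x. enn2real (W x)) \<in> borel_measurable M" using Wm by measurable
      show "AE x in M. 0 \<le> enn2real (W x)" by simp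
      have "(\<integral>\<^sup>+ x. ennreal (enn2real (W x)) \<partial>M) \<le> integral\<^sup>N M W"
        by (intro nn_integral_mono) (simp add: ennreal_enn2real_if)
      then show "(\<integral>\<^sup>+ x. ennreal (enn2real (W x)) \<partial>M) < \<infinity>" using Wfin by (simp add: le_less_trans)
    qed
    then show "integrable M (\<lambda>x. \<bar>Y x\<bar> powr p)" unfolding e .
  qed
  have bnd: "(real k + 1) * L (Z (nk k)) \<le> L Y" for k
  proof -
    have kz: "(\<lambda>x. (real k + 1) * Z (nk k) x) \<in> Lp M p" using Lp_smult[OF ZL] .
    have "AE x in M. (real k + 1) * Z (nk k) x \<le> Y x"
      using WAE AE_space
    proof eventually_elim
      case (elim x)
      have "f k x \<le> W x" unfolding W_def
        using sum_le_suminf[of "\<lambda>k. f k x" "{k}"] by auto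
      then have "enn2real (f k x) \<le> enn2real (W x)" using elim(1) by (intro enn2real_mono) (auto simp: top.not_eq_extremum)
      then have a: "((real k + 1) * Z (nk k) x) powr p \<le> enn2real (W x)" unfolding f_def by simp
      have nn: "0 \<le> (real k + 1) * Z (nk k) x" using Zpos[OF elim(2)] by simp
      have "(real k + 1) * Z (nk k) x = (((real k + 1) * Z (nk k) x) powr p) powr (1/p)"
        using nn p by (simp add: powr_powr)
      also have "\<dots> \<le> Y x" unfolding Y_def using a p by (intro powr_mono2) auto
      finally show ?case .
    qed
    then have "L (\<lambda>x. (real k + 1) * Z (nk k) x) \<le> L Y" using mono[OF kz YL] by simp
    then show ?thesis using hom[OF ZL] by simp
  qed
  show ?thesis
  proof (rule LIMSEQ_I)
    fix r :: real assume r: "0 < r"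
    obtain k where k: "L Y / r < real k + 1" using reals_Archimedean2[of "L Y / r"] by (meson less_add_one less_trans)
    have "L Y / (real k + 1) < r" using k r by (simp add: divide_less_eq mult.commute pos_divide_less_eq)
    show "\<exists>no. \<forall>n\<ge>no. norm (L (Z n) - 0) < r"
    proof (intro exI allI impI)
      fix n assume "nk k \<le> n"
      then have "L (Z n) \<le> L (Z (nk k))" using Ldec by auto
      also have "\<dots> \<le> L Y / (real k + 1)" using bnd[of k] by (simp add: field_simps)
      finally show "norm (L (Z n) - 0) < r" using Lpos[of n] \<open>L Y / (real k + 1) < r\<close> by simp
    qed
  qed
qed

lemma rep_set_nonempty:
  fixes \<rho> :: "('a \<Rightarrow> real) \<Rightarrow> real"
  assumes PS: "prob_space M" and sl: "sublinear_operator M p \<rho>" and p: "p > 0"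
  shows "rep_set M p \<rho> \<noteq> {}"
proof -
  interpret prob_space M by (rule PS)
  define V where "V = Lp M p"
  have fm: "finite_measure M" by unfold_locales
  have Vadd: "(\<lambda>z. x z + y z) \<in> V" if "x \<in> V" "y \<in> V" for x y unfolding V_def by (rule Lp_add) (use that p in \<open>auto simp: V_def\<close>)
  have Vmul: "(\<lambda>z. l * x z) \<in> V" if "x \<in> V" for x l using Lp_smult that unfolding V_def by auto
  have Vc: "(\<lambda>z. c) \<in> V" for c using Lp_const[OF fm] unfolding V_def .
  have Vb: "f \<in> V" if "f \<in> borel_measurable M" "g \<in> V" "\<And>x. x \<in> space M \<Longrightarrow> \<bar>f x\<bar> \<le> \<bar>g x\<bar>" for f g
    using Lp_bound[OF that(1), of g p] that p unfolding V_def by (auto intro!: AE_I2)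
  have rmono: "\<rho> X \<le> \<rho> Y" if "X \<in> V" "Y \<in> V" "AE x in M. X x \<le> Y x" for X Y
    using sl that unfolding sublinear_operator_def V_def by blast
  have rconst: "\<rho> (\<lambda>_. c) = c" for c using sl unfolding sublinear_operator_def by blast
  have rsub: "\<rho> (\<lambda>z. x z + y z) \<le> \<rho> x + \<rho> y" if "x \<in> V" "y \<in> V" for x y
    using sl that unfolding sublinear_operator_def V_def by blast
  have rhom: "\<rho> (\<lambda>z. l * x z) = l * \<rho> x" if "x \<in> V" "l \<ge> 0" for x l
    using sl that unfolding sublinear_operator_def V_def by blast
  obtain L where Ladd: "\<And>x y. x\<in>V \<Longrightarrow> y\<in>V \<Longrightarrow> L (\<lambda>z. x z + y z) = L x + L y"
    and Lmul: "\<And>x l. x\<in>V \<Longrightarrow> L (\<lambda>z. l * x z) = l * L x" and Lle: "\<And>x. x\<in>V \<Longrightarrow> L x \<le> \<rho> x"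
    using exists_linear_below[of V \<rho>, OF Vadd Vmul rsub rhom] by blast
  have L0: "L (\<lambda>z. 0) = 0" using Lmul[OF Vc[of 0], of 0] by simp
  have Lmono: "L X \<le> L Y" if XY: "X \<in> V" "Y \<in> V" "AE x in M. X x \<le> Y x" for X Y
  proof -
    have mY: "(\<lambda>z. (-1) * Y z) \<in> V" by (rule Vmul[OF XY(2)])
    have D: "(\<lambda>z. X z + (\<lambda>z. (-1) * Y z) z) \<in> V" using Vadd[OF XY(1) mY] .
    have "L (\<lambda>z. X z + (\<lambda>z. (-1) * Y z) z) = L X - L Y" using Ladd[OF XY(1) mY] Lmul[OF XY(2), of "-1"] by simp
    moreover have "L (\<lambda>z. X z + (\<lambda>z. (-1) * Y z) z) \<le> \<rho> (\<lambda>z. 0)"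
      using Lle[OF D] rmono[OF D Vc[of 0]] XY(3) by (force elim: AE_mp)
    ultimately show ?thesis using rconst[of 0] by simp
  qed
  have Lcong: "L X = L Y" if "X \<in> V" "Y \<in> V" "\<And>x. x \<in> space M \<Longrightarrow> X x = Y x" for X Y
    using Lmono[of X Y] Lmono[of Y X] that by (force intro!: AE_I2)
  have L1: "L (\<lambda>z. 1) = 1"
  proof -
    have "L (\<lambda>z. 1) \<le> 1" using Lle[OF Vc[of 1]] rconst[of 1] by simp
    moreover have "- L (\<lambda>z. 1) \<le> -1" using Lle[OF Vmul[OF Vc[of 1], of "-1"]] Lmul[OF Vc[of 1], of "-1"] rconst[of "-1"] by simp
    ultimately show ?thesis by simp
  qed
  have Lpos: "0 \<le> L X" if "X \<in> V" "\<And>x. x \<in> space M \<Longrightarrow> 0 \<le> X x" for X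
    using Lmono[OF Vc[of 0] that(1)] that(2) L0 by (auto intro!: AE_I2)
  have indV: "indicator A \<in> V" if "A \<in> sets M" for A
    by (rule Vb[OF _ Vc[of 1]]) (use that in \<open>auto simp: indicator_def\<close>)
  define \<mu> where "\<mu> A = ennreal (L (indicator A))" for A
  define P where "P = measure_of (space M) (sets M) \<mu>"
  have sa: "sigma_algebra (space M) (sets M)" by (rule sets.sigma_algebra_axioms)
  have pos: "positive (sets M) \<mu>" unfolding positive_def \<mu>_def using L0 by (simp add: indicator_def[abs_def])
  have ca: "countably_additive (sets M) \<mu>"
  proof (unfold countably_additive_def, intro allI impI)
    fix A :: "nat \<Rightarrow> 'a set" assume A: "range A \<subseteq> sets M" "disjoint_family A" "\<Union> (range A) \<in> sets M"
    define U where "U = \<Union> (range A)"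
    define B where "B n = (\<Union>i<n. A i)" for n
    have As: "A i \<in> sets M" for i using A(1) by auto
    have Bs: "B n \<in> sets M" for n unfolding B_def using A by auto
    have Us: "U \<in> sets M" using A unfolding U_def by auto
    have BU: "B n \<subseteq> U" for n unfolding B_def U_def by auto
    have psum: "(\<Sum>i<n. L (indicator (A i))) = L (indicator (B n))" for n
    proof (induction n)
      case 0 then show ?case using L0 by (simp add: B_def)
    next
      case (Suc n)
      have disj: "B n \<inter> A n = {}" unfolding B_def using A(2) by (auto simp: disjoint_family_on_def) (metis disjoint_iff less_irrefl)
      have e: "indicator (B (Suc n)) = (\<lambda>z. indicator (B n) z + indicator (A n) z :: real)"
        unfolding B_def using disj by (auto simp: lessThan_Suc indicator_def B_def fun_eq_iff)
      show ?case using Suc Ladd[OF indV[OF Bs[of n]] indV[OF As[of n]]] unfolding e by simp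
    qed
    define Z :: "nat \<Rightarrow> 'a \<Rightarrow> real" where "Z n = indicator (U - B n)" for n
    have Zlim: "(\<lambda>n. L (Z n)) \<longlonglongrightarrow> 0"
    proof (rule decreasing_to_zero[OF fm p, where L=L and Z=Z])
      show "\<And>X Y. X \<in> Lp M p \<Longrightarrow> Y \<in> Lp M p \<Longrightarrow> AE x in M. X x \<le> Y x \<Longrightarrow> L X \<le> L Y"
        using Lmono unfolding V_def by blast
      show "\<And>X c. X \<in> Lp M p \<Longrightarrow> L (\<lambda>x. c * X x) = c * L X" using Lmul unfolding V_def by blast
      show "Z n \<in> borel_measurable M" for n unfolding Z_def using Us Bs by measurable
      show "0 \<le> Z n x" for n x unfolding Z_def by simp
      show "Z (Suc n) x \<le> Z n x" for n x unfolding Z_def B_def by (auto simp: indicator_def lessThan_Suc)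
      show "(\<lambda>n. Z n x) \<longlonglongrightarrow> 0" for x
      proof (cases "x \<in> U")
        case True
        then obtain i where "x \<in> A i" unfolding U_def by auto
        then have "\<forall>n\<ge>Suc i. Z n x = 0" unfolding Z_def B_def by (auto simp: indicator_def)
        then show ?thesis by (intro tendsto_eventually) (auto simp: eventually_sequentially)
      next
        case False
        then show ?thesis unfolding Z_def by simp
      qed
      show "Z 0 \<in> Lp M p" using indV[OF Us] unfolding Z_def B_def V_def by simp
    qed
    have LZ: "L (Z n) = L (indicator U) - L (indicator (B n))" for n
    proof -
      have ZV: "Z n \<in> V" unfolding Z_def using Us Bs by (intro indV) auto
      have e: "indicator U = (\<lambda>z. Z n z + indicator (B n) z :: real)"
        using BU[of n] unfolding Z_def by (auto simp: indicator_def fun_eq_iff)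
      show ?thesis using Ladd[OF ZV indV[OF Bs]] unfolding e by simp
    qed
    have "(\<lambda>n. L (indicator U) - L (Z n)) \<longlonglongrightarrow> L (indicator U) - 0"
      by (intro tendsto_diff tendsto_const Zlim)
    then have "(\<lambda>n. \<Sum>i<n. L (indicator (A i))) \<longlonglongrightarrow> L (indicator U)"
      unfolding psum LZ by simp
    then have sm: "(\<lambda>i. L (indicator (A i))) sums L (indicator U)" by (simp add: sums_def)
    have nn: "0 \<le> L (indicator (A i))" for i using Lpos[OF indV] A(1) by auto
    have "(\<Sum>i. \<mu> (A i)) = ennreal (\<Sum>i. L (indicator (A i)))"
      unfolding \<mu>_def using nn sm by (intro suminf_ennreal2) (auto simp: sums_summable)
    also have "(\<Sum>i. L (indicator (A i))) = L (indicator U)" using sm by (simp add: sums_iff)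
    finally show "(\<Sum>i. \<mu> (A i)) = \<mu> (\<Union> (range A))" unfolding U_def \<mu>_def .
  qed
  have Pe: "emeasure P A = ennreal (L (indicator A))" if "A \<in> sets M" for A
    unfolding P_def using emeasure_measure_of_sigma[OF sa pos ca that] unfolding \<mu>_def .
  have Psets: "sets P = sets M" unfolding P_def by (simp add: sets_measure_of sets.space_closed)
  have Pspace: "space P = space M" unfolding P_def by (simp add: space_measure_of_conv)
  have Pprob: "prob_space P"
  proof (rule prob_spaceI)
    have "emeasure P (space P) = ennreal (L (indicator (space M)))" using Pe Pspace by simp
    also have "L (indicator (space M)) = L (\<lambda>z. 1)" using indV[OF sets.top] Vc by (intro Lcong) auto
    finally show "emeasure P (space P) = 1" using L1 by simp
  qed
  have Pac: "absolutely_continuous M P"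
    unfolding absolutely_continuous_def
  proof
    fix A assume A: "A \<in> null_sets M"
    then have As: "A \<in> sets M" by auto
    have "L (indicator A) \<le> L (\<lambda>z. 0)"
      using AE_not_in[OF A] by (intro Lmono[OF indV[OF As] Vc]) (auto elim!: AE_mp)
    then have "L (indicator A) = 0" using L0 Lpos[OF indV[OF As]] by auto
    then show "A \<in> null_sets P" using Pe[OF As] Psets As by (simp add: null_sets_def)
  qed
  have mP: "f \<in> borel_measurable P \<longleftrightarrow> f \<in> borel_measurable M" for f :: "'a \<Rightarrow> 'b::topological_space"
    using measurable_cong_sets[OF Psets refl, of borel] by blast
  have Lsum: "(\<lambda>x. \<Sum>y\<in>S. c y * h y x) \<in> V \<and> L (\<lambda>x. \<Sum>y\<in>S. c y * h y x) = (\<Sum>y\<in>S. c y * L (h y))"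
    if "finite S" "\<And>y. y \<in> S \<Longrightarrow> h y \<in> V" for S :: "real set" and c h
    using that
  proof (induction S rule: finite_induct)
    case empty then show ?case using Vc[of 0] L0 by simp
  next
    case (insert a S)
    have IH: "(\<lambda>x. \<Sum>y\<in>S. c y * h y x) \<in> V" "L (\<lambda>x. \<Sum>y\<in>S. c y * h y x) = (\<Sum>y\<in>S. c y * L (h y))"
      using insert by auto
    have ha: "(\<lambda>x. c a * h a x) \<in> V" using Vmul insert by auto
    have e: "(\<lambda>x. \<Sum>y\<in>insert a S. c y * h y x) = (\<lambda>x. (\<lambda>x. c a * h a x) x + (\<lambda>x. \<Sum>y\<in>S. c y * h y x) x)"
      using insert by simp
    show ?case unfolding e using Vadd[OF ha IH(1)] Ladd[OF ha IH(1)] IH(2) Lmul[of "h a" "c a"] insert by simp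
  qed
  have simple: "g \<in> V \<and> (\<integral>\<^sup>+ x. ennreal (g x) \<partial>P) = ennreal (L g)"
    if g: "simple_function M g" "\<And>x. x \<in> space M \<Longrightarrow> 0 \<le> g x" for g :: "'a \<Rightarrow> real"
  proof -
    define S where "S = g ` space M"
    define B where "B y = g -` {y} \<inter> space M" for y
    have fin: "finite S" using g(1) unfolding S_def simple_function_def by auto
    have Bs: "B y \<in> sets M" for y unfolding B_def using g(1) by (simp add: simple_functionD(2))
    have Snn: "0 \<le> y" if "y \<in> S" for y using that g(2) unfolding S_def by auto
    have rep: "g x = (\<Sum>y\<in>S. y * indicator (B y) x)" if "x \<in> space M" for x
    proof -
      have "g x = (\<Sum>y\<in>S. indicator (B y) x *\<^sub>R y)"
        using simple_function_indicator_representation_banach[OF g(1) that] unfolding S_def B_def .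
      also have "\<dots> = (\<Sum>y\<in>S. y * indicator (B y) x)"
        by (intro sum.cong refl) simp
      finally show ?thesis .
    qed
    have sumV: "(\<lambda>x. \<Sum>y\<in>S. y * indicator (B y) x) \<in> V"
      and Lsum': "L (\<lambda>x. \<Sum>y\<in>S. y * indicator (B y) x) = (\<Sum>y\<in>S. y * L (indicator (B y)))"
      using Lsum[OF fin, of "\<lambda>y. indicator (B y)" "\<lambda>y. y"] indV[OF Bs] by auto
    have gm: "g \<in> borel_measurable M" using g(1) by (rule borel_measurable_simple_function)
    have gV: "g \<in> V" using Vb[OF gm sumV] rep by simp
    have Lg: "L g = (\<Sum>y\<in>S. y * L (indicator (B y)))" using Lcong[OF gV sumV] rep Lsum' by simp
    have "(\<integral>\<^sup>+ x. ennreal (g x) \<partial>P) = (\<integral>\<^sup>+ x. (\<Sum>y\<in>S. ennreal y * indicator (B y) x) \<partial>P)"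
    proof (intro nn_integral_cong)
      fix x assume "x \<in> space P"
      then have x: "x \<in> space M" using Pspace by simp
      have "ennreal (g x) = (\<Sum>y\<in>S. ennreal (y * indicator (B y) x))"
        using rep[OF x] Snn by (subst sum_ennreal) auto
      also have "\<dots> = (\<Sum>y\<in>S. ennreal y * indicator (B y) x)"
        using Snn by (intro sum.cong refl) (auto simp: ennreal_mult indicator_def)
      finally show "ennreal (g x) = (\<Sum>y\<in>S. ennreal y * indicator (B y) x)" .
    qed
    also have "\<dots> = (\<Sum>y\<in>S. \<integral>\<^sup>+ x. ennreal y * indicator (B y) x \<partial>P)"
      using Bs Psets by (intro nn_integral_sum) (auto simp: mP)
    also have "\<dots> = (\<Sum>y\<in>S. ennreal y * emeasure P (B y))"
      using Bs Psets by (intro sum.cong refl nn_integral_cmult_indicator) auto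
    also have "\<dots> = (\<Sum>y\<in>S. ennreal (y * L (indicator (B y))))"
      using Snn Pe[OF Bs] Lpos[OF indV[OF Bs]] by (intro sum.cong refl) (auto simp: ennreal_mult)
    also have "\<dots> = ennreal (L g)" unfolding Lg using Snn Lpos[OF indV[OF Bs]]
      by (subst sum_ennreal) auto
    finally show ?thesis using gV by simp
  qed
  have nonneg: "(\<integral>\<^sup>+ x. ennreal (Y x) \<partial>P) = ennreal (L Y)"
    if Y: "Y \<in> V" "\<And>x. x \<in> space M \<Longrightarrow> 0 \<le> Y x" for Y
  proof -
    have Ym: "Y \<in> borel_measurable M" using Y(1) LpD(1) unfolding V_def by auto
    have um: "(\<lambda>x. ennreal (Y x)) \<in> borel_measurable M" using Ym by measurable
    obtain f where fs: "\<And>i. simple_function M (f i)" and finc: "incseq f"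
      and ffin: "\<And>i x. f i x < \<top>" and fsup: "\<And>x. (SUP i. f i x) = ennreal (Y x)"
      using borel_measurable_implies_simple_function_sequence'[OF um] by blast
    define s where "s i x = enn2real (f i x)" for i x
    have fs_eq: "f i x = ennreal (s i x)" for i x unfolding s_def using ffin[of i x] by simp
    have sle: "f i x \<le> ennreal (Y x)" for i x using fsup[of x] by (metis SUP_upper UNIV_I)
    have s_simple: "simple_function M (s i)" for i unfolding s_def using fs by (rule simple_function_compose1)
    have s_nn: "0 \<le> s i x" for i x unfolding s_def by simp
    have s_le: "s i x \<le> Y x" if "x \<in> space M" for i x
      using sle[of i x] Y(2)[OF that] unfolding fs_eq by simp
    have s_V: "s i \<in> V \<and> (\<integral>\<^sup>+ x. ennreal (s i x) \<partial>P) = ennreal (L (s i))" for i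
      using simple[OF s_simple] s_nn by auto
    have finc': "incseq (\<lambda>i. f i x)" for x using finc by (auto simp: incseq_def le_fun_def)
    have s_lim: "(\<lambda>i. s i x) \<longlonglongrightarrow> Y x" if "x \<in> space M" for x
    proof -
      have "(\<lambda>i. f i x) \<longlonglongrightarrow> (SUP i. f i x)" using LIMSEQ_SUP[OF finc'] by simp
      then have "(\<lambda>i. f i x) \<longlonglongrightarrow> ennreal (Y x)" using fsup by simp
      then show ?thesis unfolding s_def using Y(2)[OF that] by (rule tendsto_enn2real)
    qed
    have s_mono: "s i x \<le> s (Suc i) x" for i x
      using finc'[of x] unfolding incseq_def fs_eq by (simp add: ennreal_le_iff2) (meson le_SucI order_refl s_nn order_trans)
    define Z where "Z n x = Y x + (-1) * s n x" for n x
    have ZV: "Z n \<in> V" for n unfolding Z_def using Vadd[OF Y(1) Vmul[OF conjunct1[OF s_V]]] .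
    have LZ: "L (Z n) = L Y - L (s n)" for n unfolding Z_def
      using Ladd[OF Y(1) Vmul[OF conjunct1[OF s_V[of n]]], of "-1"] Lmul[OF conjunct1[OF s_V[of n]], of "-1"] by simp
    have Zlim: "(\<lambda>n. L (Z n)) \<longlonglongrightarrow> 0"
    proof (rule decreasing_to_zero[OF fm p, where L=L and Z=Z])
      show "\<And>X Y. X \<in> Lp M p \<Longrightarrow> Y \<in> Lp M p \<Longrightarrow> AE x in M. X x \<le> Y x \<Longrightarrow> L X \<le> L Y"
        using Lmono unfolding V_def by blast
      show "\<And>X c. X \<in> Lp M p \<Longrightarrow> L (\<lambda>x. c * X x) = c * L X" using Lmul unfolding V_def by blast
      show "Z n \<in> borel_measurable M" for n using ZV[of n] LpD(1) unfolding V_def by auto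
      show "0 \<le> Z n x" if "x \<in> space M" for n x using s_le[OF that, of n] unfolding Z_def by simp
      show "Z (Suc n) x \<le> Z n x" for n x using s_mono[of n x] unfolding Z_def by simp
      show "(\<lambda>n. Z n x) \<longlonglongrightarrow> 0" if "x \<in> space M" for x
      proof -
        have "(\<lambda>n. Y x + (-1) * s n x) \<longlonglongrightarrow> Y x + (-1) * Y x"
          by (intro tendsto_intros s_lim that)
        then show ?thesis unfolding Z_def by simp
      qed
      show "Z 0 \<in> Lp M p" using ZV unfolding V_def by simp
    qed
    have "(\<lambda>n. L Y - L (Z n)) \<longlonglongrightarrow> L Y - 0" by (intro tendsto_intros Zlim)
    then have "(\<lambda>n. L (s n)) \<longlonglongrightarrow> L Y" unfolding LZ by simp
    then have lim1: "(\<lambda>n. \<integral>\<^sup>+ x. ennreal (s n x) \<partial>P) \<longlonglongrightarrow> ennreal (L Y)"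
      using s_V by (simp add: tendsto_ennrealI)
    have fmP: "f i \<in> borel_measurable P" for i using borel_measurable_simple_function[OF fs[of i]] mP by blast
    have "(\<integral>\<^sup>+ x. ennreal (Y x) \<partial>P) = (\<integral>\<^sup>+ x. (SUP i. f i x) \<partial>P)" using fsup by simp
    also have "\<dots> = (SUP i. integral\<^sup>N P (f i))" by (rule nn_integral_monotone_convergence_SUP[OF finc fmP])
    finally have eqS: "(\<integral>\<^sup>+ x. ennreal (Y x) \<partial>P) = (SUP i. integral\<^sup>N P (f i))" .
    have "incseq (\<lambda>i. integral\<^sup>N P (f i))"
      using finc by (auto simp: incseq_def le_fun_def intro!: nn_integral_mono)
    then have "(\<lambda>i. integral\<^sup>N P (f i)) \<longlonglongrightarrow> (SUP i. integral\<^sup>N P (f i))" by (rule LIMSEQ_SUP)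
    then have lim2: "(\<lambda>n. \<integral>\<^sup>+ x. ennreal (s n x) \<partial>P) \<longlonglongrightarrow> (\<integral>\<^sup>+ x. ennreal (Y x) \<partial>P)"
      unfolding eqS fs_eq .
    show ?thesis using LIMSEQ_unique[OF lim2 lim1] .
  qed
  have "P \<in> rep_set M p \<rho>"
    unfolding rep_set_def
  proof (intro CollectI conjI ballI)
    show "sets P = sets M" "prob_space P" "absolutely_continuous M P" by (fact Psets Pprob Pac)+
    fix X assume XV': "X \<in> Lp M p"
    then have XV: "X \<in> V" unfolding V_def .
    have Xm: "X \<in> borel_measurable M" using XV' LpD(1) by auto
    define Xp where "Xp x = max (X x) 0" for x
    define Xn where "Xn x = max (- X x) 0" for x
    have XpV: "Xp \<in> V" unfolding Xp_def by (rule Vb[OF _ XV]) (use Xm in auto)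
    have XnV: "Xn \<in> V" unfolding Xn_def by (rule Vb[OF _ XV]) (use Xm in auto)
    have ip: "integrable P Xp \<and> integral\<^sup>L P Xp = L Xp" if "Xp \<in> V" "\<And>x. 0 \<le> Xp x" for Xp
    proof -
      have m: "Xp \<in> borel_measurable P" using that(1) LpD(1) mP unfolding V_def by auto
      have nn: "(\<integral>\<^sup>+ x. ennreal (Xp x) \<partial>P) = ennreal (L Xp)" using nonneg that by auto
      have i: "integrable P Xp" using m nn by (intro integrableI_nonneg) (auto simp: that)
      have "ennreal (integral\<^sup>L P Xp) = ennreal (L Xp)"
        using nn_integral_eq_integral[OF i] nn that by simp
      moreover have "0 \<le> integral\<^sup>L P Xp" using that by (simp add: integral_nonneg_AE)
      moreover have "0 \<le> L Xp" using Lpos that by auto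
      ultimately show ?thesis using i by simp
    qed
    have p1: "integrable P Xp" "integral\<^sup>L P Xp = L Xp" using ip[OF XpV] by (auto simp: Xp_def)
    have n1: "integrable P Xn" "integral\<^sup>L P Xn = L Xn" using ip[OF XnV] by (auto simp: Xn_def)
    have Xe: "X = (\<lambda>x. Xp x - Xn x)" unfolding Xp_def Xn_def by (auto simp: fun_eq_iff max_def)
    have LX: "L X = L Xp - L Xn"
    proof -
      have "X = (\<lambda>x. Xp x + (\<lambda>x. (-1) * Xn x) x)" using Xe by simp
      then show ?thesis using Ladd[OF XpV Vmul[OF XnV], of "-1"] Lmul[OF XnV, of "-1"] by simp
    qed
    show "integrable P X" unfolding Xe using p1 n1 by auto
    have "integral\<^sup>L P X = L X" unfolding LX using p1 n1 by (subst Xe) simp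
    then show "integral\<^sup>L P X \<le> \<rho> X" using Lle[OF XV] by simp
  qed
  then show ?thesis by auto
qed

lemma nn_integral_dens:
  assumes PS: "prob_space M" and P: "P \<in> rep_set M p \<rho>"
    and gm: "g \<in> borel_measurable M" and gnn: "\<And>x. 0 \<le> g x"
    and gi: "integrable M (\<lambda>x. dens M P x * g x)"
  shows "(\<integral>\<^sup>+ x. ennreal (g x) \<partial>P) = ennreal (\<integral>x. dens M P x * g x \<partial>M)"
proof -
  interpret prob_space M by (rule PS)
  have Ps: "sets P = sets M" and Pp: "prob_space P" and ac: "absolutely_continuous M P"
    using P unfolding rep_set_def by auto
  have sf: "sigma_finite_measure P" using Pp by (simp add: prob_space_imp_sigma_finite)
  have "(\<integral>\<^sup>+ x. ennreal (g x) \<partial>P) = (\<integral>\<^sup>+ x. ennreal (g x) \<partial>density M (RN_deriv M P))"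
    using density_RN_deriv[OF ac Ps] by simp
  also have "\<dots> = (\<integral>\<^sup>+ x. RN_deriv M P x * ennreal (g x) \<partial>M)"
    using gm by (intro nn_integral_density) auto
  also have "\<dots> = (\<integral>\<^sup>+ x. ennreal (dens M P x * g x) \<partial>M)"
    using RN_deriv_finite[OF sf ac Ps]
  proof (intro nn_integral_cong_AE, eventually_elim)
    case (elim x)
    then show ?case unfolding dens_def using gnn[of x]
      by (cases "RN_deriv M P x") (auto simp: ennreal_mult)
  qed
  also have "\<dots> = ennreal (\<integral>x. dens M P x * g x \<partial>M)"
    using gi gnn by (intro nn_integral_eq_integral) (auto simp: dens_def)
  finally show ?thesis .
qed

lemma sq_powr: "((d::real)\<^sup>2) powr r = \<bar>d\<bar> powr (2 * r)"
proof (cases "d = 0")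
  case False
  then have a: "0 < \<bar>d\<bar>" by simp
  have "\<bar>d\<bar> powr (real 2) = \<bar>d\<bar> ^ 2" by (rule powr_realpow[OF a])
  then have e: "(d\<^sup>2) = \<bar>d\<bar> powr 2" by simp
  show ?thesis unfolding e by (rule powr_powr)
qed simp

theorem corollary1:
  fixes M C :: "'a measure" and \<epsilon> :: real and \<rho> :: "('a \<Rightarrow> real) \<Rightarrow> real"
    and \<xi> :: "'a \<Rightarrow> real"
  assumes "prob_space M" and "complete_measure M"
    and "0 < \<epsilon>" and "\<epsilon> < 1"
    and "subalgebra M C"
    and "sublinear_operator M (2 + \<epsilon>) \<rho>"
    and equiv: "\<forall>P\<in>rep_set M (2 + \<epsilon>) \<rho>. absolutely_continuous P M"
    and bounded: "\<exists>B. \<forall>f\<in>dens_set M (2 + \<epsilon>) \<rho>. f \<in> Lp M (1 + 2 / \<epsilon>) \<and> Lp_norm M (1 + 2 / \<epsilon>) f \<le> B"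
    and compact: "compactin (weak_Lp_topology M (1 + 2 / \<epsilon>) (1 + \<epsilon> / 2)) (dens_set M (2 + \<epsilon>) \<rho>)"
    and "stable M C (2 + \<epsilon>) \<rho>"
    and "\<xi> \<in> Lp M (4 + 2 * \<epsilon>)"
  shows "\<exists>P\<in>rep_set M (2 + \<epsilon>) \<rho>.
           (INF \<eta>\<in>Lp_sub M C (2 + \<epsilon>). \<integral>\<^sup>+ x. ennreal ((\<xi> x - \<eta> x)\<^sup>2) \<partial>P)
         = (SUP Q\<in>rep_set M (2 + \<epsilon>) \<rho>. INF \<eta>\<in>Lp_sub M C (2 + \<epsilon>). \<integral>\<^sup>+ x. ennreal ((\<xi> x - \<eta> x)\<^sup>2) \<partial>Q)"
proof -
  interpret prob_space M by (rule assms(1))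
  have fm: "finite_measure M" by unfold_locales
  have ep: "0 < \<epsilon>" by (rule assms(3))
  define R where "R = rep_set M (2 + \<epsilon>) \<rho>"
  define q where "q = 1 + 2 / \<epsilon>"
  define r where "r = 1 + \<epsilon> / 2"
  define Ls where "Ls = Lp_sub M C (2 + \<epsilon>)"
  have xiL: "\<xi> \<in> Lp M (2 + \<epsilon>)" using Lp_mono_exp[OF fm assms(11)] ep by auto
  define g where "g \<eta> x = (\<xi> x - \<eta> x)\<^sup>2" for \<eta> x
  have gnn: "0 \<le> g \<eta> x" for \<eta> x unfolding g_def by simp
  have gr: "g \<eta> \<in> Lp M r" if "\<eta> \<in> Ls" for \<eta>
  proof -
    have eL: "\<eta> \<in> Lp M (2 + \<epsilon>)" using that unfolding Ls_def Lp_sub_def by auto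
    have dL: "(\<lambda>x. \<xi> x + (\<lambda>x. (-1) * \<eta> x) x) \<in> Lp M (2 + \<epsilon>)"
      by (rule Lp_add[OF xiL Lp_smult[OF eL]]) (use ep in auto)
    show ?thesis
    proof (rule LpI)
      show "g \<eta> \<in> borel_measurable M" unfolding g_def using LpD(1)[OF xiL] LpD(1)[OF eL] by measurable
      have "\<bar>g \<eta> x\<bar> powr r = \<bar>\<xi> x + (-1) * \<eta> x\<bar> powr (2 + \<epsilon>)" for x
      proof -
        have "\<bar>g \<eta> x\<bar> powr r = ((\<xi> x - \<eta> x)\<^sup>2) powr r" unfolding g_def by simp
        also have "\<dots> = \<bar>\<xi> x - \<eta> x\<bar> powr (2 * r)" by (rule sq_powr)
        also have "2 * r = 2 + \<epsilon>" unfolding r_def by simp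
        finally show ?thesis by simp
      qed
      then show "integrable M (\<lambda>x. \<bar>g \<eta> x\<bar> powr r)" using LpD(2)[OF dL] by simp
    qed
  qed
  obtain Bd where Bd: "\<And>f. f \<in> dens_set M (2 + \<epsilon>) \<rho> \<Longrightarrow> f \<in> Lp M q" using bounded unfolding q_def by blast
  have densq: "dens M P \<in> Lp M q" if "P \<in> R" for P using Bd that unfolding dens_set_def R_def by auto
  have dnn: "0 \<le> dens M P x" for P x unfolding dens_def by simp
  have prodint: "integrable M (\<lambda>x. f x * h x)"
    if f: "f \<in> Lp M q" "\<And>x. 0 \<le> f x" and h: "h \<in> Lp M r" "\<And>x. 0 \<le> h x" for f h
  proof (rule Bochner_Integration.integrable_bound)
    show "integrable M (\<lambda>x. \<bar>f x\<bar> powr q / q + \<bar>h x\<bar> powr r / r)"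
      using LpD(2)[OF f(1)] LpD(2)[OF h(1)] by auto
    show "(\<lambda>x. f x * h x) \<in> borel_measurable M" using LpD(1)[OF f(1)] LpD(1)[OF h(1)] by measurable
    have q1: "q > 1" unfolding q_def using ep by simp
    have r1: "r > 1" unfolding r_def using ep by simp
    have nz: "\<epsilon> * \<epsilon> + (4 + \<epsilon> * 4) \<noteq> 0" using mult_pos_pos[OF ep ep] ep by linarith
    have qr: "1 / q + 1 / r = 1" unfolding q_def r_def using ep nz by (simp add: field_simps)
    show "AE x in M. norm (f x * h x) \<le> norm (\<bar>f x\<bar> powr q / q + \<bar>h x\<bar> powr r / r)"
    proof (intro AE_I2)
      fix x
      have "f x * h x \<le> f x powr q / q + h x powr r / r"
        by (rule Youngs_inequality[OF q1 r1 qr f(2) h(2)])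
      then show "norm (f x * h x) \<le> norm (\<bar>f x\<bar> powr q / q + \<bar>h x\<bar> powr r / r)"
        using f(2)[of x] h(2)[of x] by simp
    qed
  qed
  have Feq: "(\<integral>\<^sup>+ x. ennreal ((\<xi> x - \<eta> x)\<^sup>2) \<partial>P) = ennreal (\<integral>x. dens M P x * g \<eta> x \<partial>M)"
    if P: "P \<in> R" and e: "\<eta> \<in> Ls" for P \<eta>
  proof -
    have "(\<integral>\<^sup>+ x. ennreal (g \<eta> x) \<partial>P) = ennreal (\<integral>x. dens M P x * g \<eta> x \<partial>M)"
      using P unfolding R_def
      by (rule nn_integral_dens[OF assms(1)]) (use gr[OF e] LpD(1) gnn prodint[OF densq[OF P] dnn gr[OF e] gnn] in auto)
    then show ?thesis unfolding g_def .
  qed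
  define Op where "Op \<eta> t = {f \<in> Lp M q. (\<integral>x. f x * g \<eta> x \<partial>M) < t}" for \<eta> t
  have Oopen: "openin (weak_Lp_topology M q r) (Op \<eta> t)" if e: "\<eta> \<in> Ls" for \<eta> t
  proof -
    define PT where "PT = product_topology (\<lambda>_. euclideanreal) (Lp M r)"
    define W where "W = {k \<in> topspace PT. k (g \<eta>) \<in> {..<t}}"
    have ow: "openin PT W" unfolding W_def PT_def
      by (rule openin_continuous_map_preimage[OF continuous_map_product_projection[OF gr[OF e]]])
        (simp add: open_openin[symmetric])
    have key: "restrict (\<lambda>h. \<integral>x. f x * h x \<partial>M) (Lp M r) \<in> W \<longleftrightarrow> (\<integral>x. f x * g \<eta> x \<partial>M) < t" for f
      unfolding W_def PT_def using gr[OF e] by (simp add: restrict_PiE_iff)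
    have eqO: "Op \<eta> t = (\<lambda>f. restrict (\<lambda>h. \<integral>x. f x * h x \<partial>M) (Lp M r)) -` W \<inter> Lp M q"
    proof (intro set_eqI)
      fix f
      show "f \<in> Op \<eta> t \<longleftrightarrow> f \<in> (\<lambda>f. restrict (\<lambda>h. \<integral>x. f x * h x \<partial>M) (Lp M r)) -` W \<inter> Lp M q"
        unfolding Op_def using key[of f] by auto
    qed
    show ?thesis unfolding weak_Lp_topology_def openin_pullback_topology
    proof (intro exI conjI)
      show "openin (product_topology (\<lambda>_. euclideanreal) (Lp M r)) W" using ow unfolding PT_def .
      show "Op \<eta> t = (\<lambda>f. restrict (\<lambda>h. \<integral>x. f x * h x \<partial>M) (Lp M r)) -` W \<inter> Lp M q" by (rule eqO)
    qed
  qed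
  define Fv where "Fv P = (INF \<eta>\<in>Ls. \<integral>\<^sup>+ x. ennreal ((\<xi> x - \<eta> x)\<^sup>2) \<partial>P)" for P
  define S where "S = (SUP Q\<in>R. Fv Q)"
  have "\<exists>P\<in>R. Fv P = S"
  proof (rule ccontr)
    assume nex: "\<not> (\<exists>P\<in>R. Fv P = S)"
    have lt: "Fv P < S" if "P \<in> R" for P
    proof -
      have "Fv P \<le> S" unfolding S_def by (rule SUP_upper[OF that])
      moreover have "Fv P \<noteq> S" using nex that by blast
      ultimately show ?thesis by simp
    qed
    have Rne: "R \<noteq> {}" unfolding R_def by (rule rep_set_nonempty[OF assms(1) assms(6)]) (use ep in auto)
    then obtain P0 where "P0 \<in> R" by auto
    then have Spos: "0 < S" using lt[of P0] by (simp add: le_less_trans)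
    define U where "U = {Op \<eta> t | \<eta> t. \<eta> \<in> Ls \<and> ennreal t < S}"
    have cover: "dens_set M (2 + \<epsilon>) \<rho> \<subseteq> \<Union>U"
    proof
      fix f assume "f \<in> dens_set M (2 + \<epsilon>) \<rho>"
      then obtain P where P: "P \<in> R" and f: "f = dens M P" unfolding dens_set_def R_def by auto
      from lt[OF P] obtain \<eta> where e: "\<eta> \<in> Ls" and lt2: "(\<integral>\<^sup>+ x. ennreal ((\<xi> x - \<eta> x)\<^sup>2) \<partial>P) < S"
        unfolding Fv_def by (auto simp: INF_less_iff)
      define c where "c = (\<integral>x. dens M P x * g \<eta> x \<partial>M)"
      have c0: "0 \<le> c" unfolding c_def using dnn gnn by (intro integral_nonneg_AE) (auto intro: mult_nonneg_nonneg)
      have "ennreal c < S" using lt2 Feq[OF P e] unfolding c_def by simp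
      then obtain z where z: "ennreal c < z" "z < S" using dense by blast
      then have "z \<noteq> \<top>" using top_greatest[of S] by (metis not_le)
      then obtain t where t: "z = ennreal t" "0 \<le> t" by (cases z) auto
      have ct: "c < t" using z(1) t c0 by (simp add: ennreal_less_iff)
      have "f \<in> Op \<eta> t" unfolding Op_def f using densq[OF P] ct unfolding c_def by auto
      moreover have "Op \<eta> t \<in> U" unfolding U_def using e z t by auto
      ultimately show "f \<in> \<Union>U" by auto
    qed
    have opens: "\<forall>B\<in>U. openin (weak_Lp_topology M (1 + 2 / \<epsilon>) (1 + \<epsilon> / 2)) B"
      unfolding U_def q_def[symmetric] r_def[symmetric] using Oopen by auto
    obtain F where F: "finite F" "F \<subseteq> U" "dens_set M (2 + \<epsilon>) \<rho> \<subseteq> \<Union>F"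
    proof -
      have "\<forall>\<U>. (\<forall>B\<in>\<U>. openin (weak_Lp_topology M (1 + 2 / \<epsilon>) (1 + \<epsilon> / 2)) B) \<and> dens_set M (2 + \<epsilon>) \<rho> \<subseteq> \<Union>\<U> \<longrightarrow>
          (\<exists>F. finite F \<and> F \<subseteq> \<U> \<and> dens_set M (2 + \<epsilon>) \<rho> \<subseteq> \<Union>F)"
        using compact unfolding compactin_def by blast
      then have "\<exists>F. finite F \<and> F \<subseteq> U \<and> dens_set M (2 + \<epsilon>) \<rho> \<subseteq> \<Union>F"
        using opens cover by blast
      then show ?thesis using that by blast
    qed
    have "\<exists>T. ennreal T < S \<and> (\<forall>B\<in>F. \<exists>\<eta>\<in>Ls. B \<subseteq> {f. (\<integral>x. f x * g \<eta> x \<partial>M) < T})"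
      using F(1,2)
    proof (induction F rule: finite_induct)
      case empty then show ?case using Spos by (intro exI[of _ 0]) simp
    next
      case (insert B F)
      then obtain T where T: "ennreal T < S" "\<forall>B\<in>F. \<exists>\<eta>\<in>Ls. B \<subseteq> {f. (\<integral>x. f x * g \<eta> x \<partial>M) < T}" by auto
      from insert(4) obtain \<eta> t where B: "B = Op \<eta> t" "\<eta> \<in> Ls" "ennreal t < S" unfolding U_def by auto
      show ?case
      proof (intro exI[of _ "max T t"] conjI ballI)
        show "ennreal (max T t) < S" using T(1) B(3) by (cases "T \<le> t") (auto simp: max_def)
        fix B' assume "B' \<in> insert B F"
        then show "\<exists>\<eta>\<in>Ls. B' \<subseteq> {f. (\<integral>x. f x * g \<eta> x \<partial>M) < max T t}"
        proof
          assume "B' = B"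
          have "B' \<subseteq> {f. (\<integral>x. f x * g \<eta> x \<partial>M) < max T t}"
            unfolding \<open>B' = B\<close> B(1) Op_def by (auto simp: less_max_iff_disj)
          then show ?thesis using B(2) by blast
        next
          assume "B' \<in> F"
          then obtain \<eta>' where e': "\<eta>' \<in> Ls" and sub: "B' \<subseteq> {f. (\<integral>x. f x * g \<eta>' x \<partial>M) < T}"
            using T(2) by blast
          have "B' \<subseteq> {f. (\<integral>x. f x * g \<eta>' x \<partial>M) < max T t}"
            using sub by (auto simp: less_max_iff_disj)
          then show ?thesis using e' by blast
        qed
      qed
    qed
    then obtain T where T: "ennreal T < S" "\<And>B. B \<in> F \<Longrightarrow> \<exists>\<eta>\<in>Ls. B \<subseteq> {f. (\<integral>x. f x * g \<eta> x \<partial>M) < T}" by auto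
    have "Fv P \<le> ennreal T" if P: "P \<in> R" for P
    proof -
      have "dens M P \<in> dens_set M (2 + \<epsilon>) \<rho>" using P unfolding dens_set_def R_def by auto
      then obtain B where "B \<in> F" "dens M P \<in> B" using F(3) by auto
      then obtain \<eta> where e: "\<eta> \<in> Ls" and lt3: "(\<integral>x. dens M P x * g \<eta> x \<partial>M) < T" using T(2) by blast
      have "Fv P \<le> (\<integral>\<^sup>+ x. ennreal ((\<xi> x - \<eta> x)\<^sup>2) \<partial>P)" unfolding Fv_def using e by (rule INF_lower)
      also have "\<dots> = ennreal (\<integral>x. dens M P x * g \<eta> x \<partial>M)" by (rule Feq[OF P e])
      also have "\<dots> \<le> ennreal T" using lt3 by (intro ennreal_leI) simp
      finally show ?thesis .
    qed
    then have "S \<le> ennreal T" unfolding S_def by (intro SUP_least)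
    then show False using T(1) by simp
  qed
  then show ?thesis unfolding Fv_def S_def R_def Ls_def .
qed


end
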